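(* Let $\mathcal{D}=(X,\mathcal{B})$ be a quasi-symmetric $2$-$(56,12,9)$ design with block intersection numbers $0$ and $3$, and let $z\in X$. Then: (i) the derived design $\mathcal{D}^z$ is a $1$-$(55,11,9)$ design with $45$ blocks, and its dual design $(\mathcal{D}^z)^*$ is a $2$-$(45,9,2)$ design; (ii) the residual design $\mathcal{D}_z$ is a $1$-$(55,12,36)$ design with $165$ blocks, and every column of the $55\times 165$ (points by blocks) incidence matrix of $\mathcal{D}_z$ lies in $C^\perp$, where $C$ is the linear code over $GF(3)$ spanned by the columns of the $55\times 45$ (points by blocks) incidence matrix of $\mathcal{D}^z$ (both incidence matrices using the same ordering of the $55$ points of $X\setminus\{z\}$), and $C^\perp$ is its dual with respect to the standard inner product.
   Context: A $t$-$(v,k,\lambda)$ design is a pair $(X,\mathcal{B})$ with $|X|=v$ points and a collection $\mathcal{B}$ of $k$-subsets (blocks) such that every $t$-subset of points lies in exactly $\lambda$ blocks. A $2$-design is quasi-symmetric with intersection numbers $x<y$ if any two distinct blocks meet in exactly $x$ or $y$ points. For a point $z$, the derived design $\mathcal{D}^z$ has point set $X\setminus\{z\}$ and blocks $\{B\setminus\{z\}: B\in\mathcal{B}, z\in B\}$; the residual design $\mathcal{D}_z$ has point set $X\setminus\{z\}$ and blocks $\{B\in\mathcal{B}: z\notin B\}$. The dual design of a design has as points the blocks of the original and as blocks the points, with incidence preserved (incidence matrix transposed). The points-by-blocks incidence matrix $A=(a_{ij})$ has $a_{ij}=1$ if point $i$ lies in block $j$ and $0$ otherwise. *)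

theory Defs
  imports Main "HOL-Library.Numeral_Type"
begin

text \<open>A design is given by a point set X, a finite index set I of blocks and a block
  map B (so repeated blocks are allowed). t-(v,k,lambda) design:\<close>
definition t_design :: "nat \<Rightarrow> nat \<Rightarrow> nat \<Rightarrow> nat \<Rightarrow> 'a set \<Rightarrow> 'i set \<Rightarrow> ('i \<Rightarrow> 'a set) \<Rightarrow> bool" where
  "t_design t v k lam X I B \<longleftrightarrow>
     finite X \<and> card X = v \<and> finite I \<and>
     (\<forall>i\<in>I. B i \<subseteq> X \<and> card (B i) = k) \<and>
     (\<forall>T. T \<subseteq> X \<and> card T = t \<longrightarrow> card {i\<in>I. T \<subseteq> B i} = lam)"

definition quasi_symmetric :: "nat \<Rightarrow> nat \<Rightarrow> nat \<Rightarrow> nat \<Rightarrow> nat \<Rightarrow> 'a set \<Rightarrow> 'i set \<Rightarrow> ('i \<Rightarrow> 'a set) \<Rightarrow> bool" where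
  "quasi_symmetric v k lam x y X I B \<longleftrightarrow>
     t_design 2 v k lam X I B \<and>
     (\<forall>i\<in>I. \<forall>j\<in>I. i \<noteq> j \<longrightarrow> card (B i \<inter> B j) = x \<or> card (B i \<inter> B j) = y)"

text \<open>Derived design at z: points X - {z}, blocks B i - {z} for blocks through z.\<close>
definition derived_idx :: "'i set \<Rightarrow> ('i \<Rightarrow> 'a set) \<Rightarrow> 'a \<Rightarrow> 'i set" where
  "derived_idx I B z = {i\<in>I. z \<in> B i}"
definition derived_blk :: "('i \<Rightarrow> 'a set) \<Rightarrow> 'a \<Rightarrow> 'i \<Rightarrow> 'a set" where
  "derived_blk B z i = B i - {z}"

text \<open>Residual design at z: points X - {z}, blocks B i for blocks not through z.\<close>
definition residual_idx :: "'i set \<Rightarrow> ('i \<Rightarrow> 'a set) \<Rightarrow> 'a \<Rightarrow> 'i set" where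
  "residual_idx I B z = {i\<in>I. z \<notin> B i}"

text \<open>Dual design of (X,I,B): points I, blocks indexed by X, block of x = {i. x in B i}.\<close>
definition dual_blk :: "'i set \<Rightarrow> ('i \<Rightarrow> 'a set) \<Rightarrow> 'a \<Rightarrow> 'i set" where
  "dual_blk I B x = {i\<in>I. x \<in> B i}"

text \<open>Column of the points-by-blocks incidence matrix over GF(3) (type 3 = Z/3Z),
  vectors indexed by points.\<close>
definition inc_col :: "('i \<Rightarrow> 'a set) \<Rightarrow> 'i \<Rightarrow> 'a \<Rightarrow> 3" where
  "inc_col B i p = (if p \<in> B i then 1 else 0)"

definition code_span :: "'a set \<Rightarrow> 'i set \<Rightarrow> ('i \<Rightarrow> 'a \<Rightarrow> 3) \<Rightarrow> ('a \<Rightarrow> 3) set" where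
  "code_span P J col = {v. \<exists>c. \<forall>p\<in>P. v p = (\<Sum>j\<in>J. c j * col j p)}"

definition dual_code :: "'a set \<Rightarrow> ('a \<Rightarrow> 3) set \<Rightarrow> ('a \<Rightarrow> 3) set" where
  "dual_code P C = {w. \<forall>v\<in>C. (\<Sum>p\<in>P. w p * v p) = 0}"

end

theory Submission
  imports Defs
begin

lemma card_filter_sum:
  assumes "finite I"
  shows "card {i\<in>I. P i} = (\<Sum>i\<in>I. if P i then 1 else (0::nat))"
  using assms by (simp add: sum.If_cases Int_def)

lemma dc:
  assumes "finite X" "finite I" "\<forall>i\<in>I. B i \<subseteq> X"
  shows "(\<Sum>x\<in>X. card {i\<in>I. x \<in> B i}) = (\<Sum>i\<in>I. card (B i))"
proof -
  have "(\<Sum>x\<in>X. card {i\<in>I. x \<in> B i}) = (\<Sum>x\<in>X. \<Sum>i\<in>I. if x \<in> B i then 1 else (0::nat))"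
    using assms by (simp add: card_filter_sum)
  also have "\<dots> = (\<Sum>i\<in>I. \<Sum>x\<in>X. if x \<in> B i then 1 else (0::nat))"
    by (rule sum.swap)
  also have "\<dots> = (\<Sum>i\<in>I. card {x\<in>X. x \<in> B i})"
    using assms by (simp add: card_filter_sum)
  also have "\<dots> = (\<Sum>i\<in>I. card (B i))"
    using assms(3) by (intro sum.cong) (auto intro!: arg_cong[where f=card])
  finally show ?thesis .
qed

lemma ind_sum3:
  assumes "finite P"
  shows "(\<Sum>p\<in>P. (if p \<in> S then 1 else 0) * (if p \<in> T then 1 else (0::3))) = of_nat (card (P \<inter> S \<inter> T))"
proof -
  have "(\<Sum>p\<in>P. (if p \<in> S then 1 else 0) * (if p \<in> T then 1 else (0::3)))
      = (\<Sum>p\<in>P. if p \<in> S \<inter> T then 1 else 0)"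
    by (intro sum.cong) auto
  also have "\<dots> = of_nat (card (P \<inter> (S \<inter> T)))"
    using assms by (simp add: sum.If_cases Int_def)
  finally show ?thesis by (simp add: Int_assoc)
qed

theorem lemma1:
  fixes X :: "'a set" and I :: "'i set" and B :: "'i \<Rightarrow> 'a set" and z :: 'a
  assumes "quasi_symmetric 56 12 9 0 3 X I B"
    and "z \<in> X"
  shows "t_design 1 55 11 9 (X - {z}) (derived_idx I B z) (derived_blk B z)
       \<and> card (derived_idx I B z) = 45
       \<and> t_design 2 45 9 2 (derived_idx I B z) (X - {z}) (dual_blk (derived_idx I B z) (derived_blk B z))
       \<and> t_design 1 55 12 36 (X - {z}) (residual_idx I B z) B
       \<and> card (residual_idx I B z) = 165
       \<and> (\<forall>j\<in>residual_idx I B z.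
            inc_col B j \<in> dual_code (X - {z})
              (code_span (X - {z}) (derived_idx I B z) (inc_col (derived_blk B z))))"
proof -
  have fX: "finite X" and cX: "card X = 56" and fI: "finite I"
    and blk: "\<And>i. i \<in> I \<Longrightarrow> B i \<subseteq> X \<and> card (B i) = 12"
    and lam: "\<And>T. T \<subseteq> X \<Longrightarrow> card T = 2 \<Longrightarrow> card {i\<in>I. T \<subseteq> B i} = 9"
    and qs: "\<And>i j. i \<in> I \<Longrightarrow> j \<in> I \<Longrightarrow> i \<noteq> j \<Longrightarrow> card (B i \<inter> B j) = 0 \<or> card (B i \<inter> B j) = 3"
    using assms(1) unfolding quasi_symmetric_def t_design_def by auto
  have fB: "\<And>i. i \<in> I \<Longrightarrow> finite (B i)" using blk fX finite_subset by blast
  have pair: "card {i\<in>I. x \<in> B i \<and> p \<in> B i} = 9" if "x \<in> X" "p \<in> X" "p \<noteq> x" for x p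
  proof -
    have "card {i\<in>I. {x,p} \<subseteq> B i} = 9" using lam[of "{x,p}"] that by auto
    moreover have "{i\<in>I. {x,p} \<subseteq> B i} = {i\<in>I. x \<in> B i \<and> p \<in> B i}" by auto
    ultimately show ?thesis by simp
  qed
  have rep: "card {i\<in>I. x \<in> B i} = 45" if xX: "x \<in> X" for x
  proof -
    let ?I = "{i\<in>I. x \<in> B i}"
    have "(\<Sum>p\<in>X-{x}. card {i\<in>?I. p \<in> B i - {x}}) = (\<Sum>i\<in>?I. card (B i - {x}))"
      by (rule dc) (use fX fI blk in auto)
    moreover have "(\<Sum>p\<in>X-{x}. card {i\<in>?I. p \<in> B i - {x}}) = (\<Sum>p\<in>X-{x}. 9)"
    proof (intro sum.cong refl)
      fix p assume "p \<in> X - {x}"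
      then have "card {i\<in>I. x \<in> B i \<and> p \<in> B i} = 9" using pair xX by auto
      moreover have "{i\<in>?I. p \<in> B i - {x}} = {i\<in>I. x \<in> B i \<and> p \<in> B i}"
        using \<open>p \<in> X - {x}\<close> by auto
      ultimately show "card {i\<in>?I. p \<in> B i - {x}} = 9" by simp
    qed
    moreover have "(\<Sum>i\<in>?I. card (B i - {x})) = (\<Sum>i\<in>?I. 11)"
      by (intro sum.cong refl) (auto simp: blk fB)
    moreover have "card (X - {x}) = 55" using cX xX fX by simp
    ultimately have "55 * 9 = card ?I * (11::nat)" by simp
    then show ?thesis by simp
  qed
  have cI: "card I = 210"
  proof -
    have "(\<Sum>x\<in>X. card {i\<in>I. x \<in> B i}) = (\<Sum>i\<in>I. card (B i))"
      by (rule dc) (use fX fI blk in auto)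
    moreover have "(\<Sum>x\<in>X. card {i\<in>I. x \<in> B i}) = (\<Sum>x\<in>X. 45)"
      by (intro sum.cong refl) (simp add: rep)
    moreover have "(\<Sum>i\<in>I. card (B i)) = (\<Sum>i\<in>I. 12)"
      by (intro sum.cong refl) (simp add: blk)
    ultimately have "56 * 45 = card I * (12::nat)" using cX by simp
    then show ?thesis by simp
  qed
  have cD: "card (derived_idx I B z) = 45" using rep[OF assms(2)] by (simp add: derived_idx_def)
  have cR: "card (residual_idx I B z) = 165"
  proof -
    have "residual_idx I B z = I - derived_idx I B z" by (auto simp: residual_idx_def derived_idx_def)
    moreover have "derived_idx I B z \<subseteq> I" by (auto simp: derived_idx_def)
    ultimately show ?thesis using cD cI fI by (simp add: card_Diff_subset finite_subset)
  qed
  have fD: "finite (derived_idx I B z)" using fI by (simp add: derived_idx_def)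
  have cXz: "card (X - {z}) = 55" using cX assms(2) fX by simp
  have P1: "t_design 1 55 11 9 (X - {z}) (derived_idx I B z) (derived_blk B z)"
    unfolding t_design_def
  proof (intro conjI allI impI ballI)
    show "finite (X - {z})" using fX by simp
    show "card (X - {z}) = 55" by (rule cXz)
    show "finite (derived_idx I B z)" by (rule fD)
  next
    fix i assume "i \<in> derived_idx I B z"
    then show "derived_blk B z i \<subseteq> X - {z}" "card (derived_blk B z i) = 11"
      using blk fB by (auto simp: derived_idx_def derived_blk_def)
  next
    fix T assume T: "T \<subseteq> X - {z} \<and> card T = 1"
    then obtain p where p: "T = {p}" by (auto simp: card_1_singleton_iff)
    have "{i \<in> derived_idx I B z. T \<subseteq> derived_blk B z i} = {i\<in>I. z \<in> B i \<and> p \<in> B i}"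
      using T p by (auto simp: derived_idx_def derived_blk_def)
    then show "card {i \<in> derived_idx I B z. T \<subseteq> derived_blk B z i} = 9"
      using pair[OF assms(2), of p] T p by auto
  qed
  have P3: "t_design 2 45 9 2 (derived_idx I B z) (X - {z}) (dual_blk (derived_idx I B z) (derived_blk B z))"
    unfolding t_design_def
  proof (intro conjI allI impI ballI)
    show "finite (X - {z})" using fX by simp
    show "card (derived_idx I B z) = 45" by (rule cD)
    show "finite (derived_idx I B z)" by (rule fD)
  next
    fix p assume p: "p \<in> X - {z}"
    show "dual_blk (derived_idx I B z) (derived_blk B z) p \<subseteq> derived_idx I B z"
      by (auto simp: dual_blk_def)
    have "dual_blk (derived_idx I B z) (derived_blk B z) p = {i\<in>I. z \<in> B i \<and> p \<in> B i}"
      using p by (auto simp: dual_blk_def derived_idx_def derived_blk_def)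
    then show "card (dual_blk (derived_idx I B z) (derived_blk B z) p) = 9"
      using pair[OF assms(2), of p] p by auto
  next
    fix T assume T: "T \<subseteq> derived_idx I B z \<and> card T = 2"
    then obtain i j where ij: "T = {i,j}" "i \<noteq> j" by (auto simp: card_2_iff)
    have iI: "i \<in> I" "z \<in> B i" "j \<in> I" "z \<in> B j" using T ij by (auto simp: derived_idx_def)
    have "{p \<in> X - {z}. T \<subseteq> dual_blk (derived_idx I B z) (derived_blk B z) p} = (B i \<inter> B j) - {z}"
      using ij iI blk by (auto simp: dual_blk_def derived_idx_def derived_blk_def)
    moreover have "card (B i \<inter> B j) = 3"
      using qs[OF iI(1) iI(3) ij(2)] iI fB by (auto simp: card_eq_0_iff)
    ultimately show "card {p \<in> X - {z}. T \<subseteq> dual_blk (derived_idx I B z) (derived_blk B z) p} = 2"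
      using iI fB by simp
  qed
  have P4: "t_design 1 55 12 36 (X - {z}) (residual_idx I B z) B"
    unfolding t_design_def
  proof (intro conjI allI impI ballI)
    show "finite (X - {z})" using fX by simp
    show "card (X - {z}) = 55" by (rule cXz)
    show "finite (residual_idx I B z)" using fI by (simp add: residual_idx_def)
  next
    fix i assume "i \<in> residual_idx I B z"
    then show "B i \<subseteq> X - {z}" "card (B i) = 12"
      using blk by (auto simp: residual_idx_def)
  next
    fix T assume T: "T \<subseteq> X - {z} \<and> card T = 1"
    then obtain p where p: "T = {p}" by (auto simp: card_1_singleton_iff)
    have pX: "p \<in> X" "p \<noteq> z" using T p by auto
    have "{i \<in> residual_idx I B z. T \<subseteq> B i} = {i\<in>I. p \<in> B i} - {i\<in>I. z \<in> B i \<and> p \<in> B i}"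
      using p by (auto simp: residual_idx_def)
    moreover have "card ({i\<in>I. p \<in> B i} - {i\<in>I. z \<in> B i \<and> p \<in> B i}) = 45 - 9"
      using rep[OF pX(1)] pair[OF assms(2) pX(1)] pX fI
      by (subst card_Diff_subset) auto
    ultimately show "card {i \<in> residual_idx I B z. T \<subseteq> B i} = 36" by simp
  qed
  have P6: "\<forall>j\<in>residual_idx I B z.
            inc_col B j \<in> dual_code (X - {z})
              (code_span (X - {z}) (derived_idx I B z) (inc_col (derived_blk B z)))"
  proof (intro ballI)
    fix j assume j: "j \<in> residual_idx I B z"
    have jI: "j \<in> I" "z \<notin> B j" using j by (auto simp: residual_idx_def)
    have inner: "(\<Sum>p\<in>X-{z}. inc_col B j p * inc_col (derived_blk B z) i p) = 0"
      if i: "i \<in> derived_idx I B z" for i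
    proof -
      have iI: "i \<in> I" "z \<in> B i" using i by (auto simp: derived_idx_def)
      have ne: "i \<noteq> j" using iI jI by auto
      have "(\<Sum>p\<in>X-{z}. inc_col B j p * inc_col (derived_blk B z) i p)
          = of_nat (card ((X-{z}) \<inter> B j \<inter> derived_blk B z i))"
        unfolding inc_col_def using fX by (intro ind_sum3) simp
      also have "(X-{z}) \<inter> B j \<inter> derived_blk B z i = B j \<inter> B i"
        using blk[OF jI(1)] jI by (auto simp: derived_blk_def)
      also have "card (B j \<inter> B i) = 0 \<or> card (B j \<inter> B i) = 3"
        using qs[OF jI(1) iI(1)] ne by auto
      then have "(of_nat (card (B j \<inter> B i)) :: 3) = 0" by auto
      finally show ?thesis .
    qed
    show "inc_col B j \<in> dual_code (X - {z})
              (code_span (X - {z}) (derived_idx I B z) (inc_col (derived_blk B z)))"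
      unfolding dual_code_def
    proof (intro CollectI ballI)
      fix v assume "v \<in> code_span (X - {z}) (derived_idx I B z) (inc_col (derived_blk B z))"
      then obtain c where c: "\<forall>p\<in>X-{z}. v p = (\<Sum>i\<in>derived_idx I B z. c i * inc_col (derived_blk B z) i p)"
        by (auto simp: code_span_def)
      have "(\<Sum>p\<in>X-{z}. inc_col B j p * v p)
          = (\<Sum>p\<in>X-{z}. \<Sum>i\<in>derived_idx I B z. c i * (inc_col B j p * inc_col (derived_blk B z) i p))"
        using c by (intro sum.cong refl) (simp add: sum_distrib_left algebra_simps)
      also have "\<dots> = (\<Sum>i\<in>derived_idx I B z. \<Sum>p\<in>X-{z}. c i * (inc_col B j p * inc_col (derived_blk B z) i p))"
        by (rule sum.swap)
      also have "\<dots> = (\<Sum>i\<in>derived_idx I B z. c i * (\<Sum>p\<in>X-{z}. inc_col B j p * inc_col (derived_blk B z) i p))"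
        by (simp add: sum_distrib_left)
      also have "\<dots> = 0" by (simp add: inner)
      finally show "(\<Sum>p\<in>X-{z}. inc_col B j p * v p) = 0" .
    qed
  qed
  show ?thesis using P1 cD P3 P4 cR P6 by blast
qed

end
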